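(* A bounded convex subset $A$ of a Banach space $X$ is an SCD set if and only if there is a sequence $(V_n)_{n\in\mathbb{N}}$ of convex combinations of slices of $A$ such that every nonempty relatively weakly open subset of $A$ contains some $V_n$.
   Context: A slice of $A$ is $S(A,x^*,\varepsilon)=\{x\in A:\ \mathrm{Re}\,x^*(x)>\sup\mathrm{Re}\,x^*(A)-\varepsilon\}$ ($x^*\in X^*$, $\varepsilon>0$). A convex combination of slices of $A$ is a set $\sum_{i=1}^m\lambda_iS_i$ with $\lambda_i>0$, $\sum\lambda_i=1$, $S_i$ slices of $A$. $A$ is an SCD set if there is a sequence $(S_n)$ of slices of $A$ such that $A\subseteq\overline{\mathrm{conv}}(B)$ for every $B\subseteq A$ intersecting every $S_n$. *)

theory Defs
  imports "HOL-Analysis.Analysis"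
begin

text \<open>Real (continuous) dual elements are bounded linear maps to real.
  For a complex Banach space, Re x* ranges exactly over the real bounded linear
  functionals of the underlying real space, so this covers both cases.\<close>

definition slice :: "'a::real_normed_vector set \<Rightarrow> ('a \<Rightarrow> real) \<Rightarrow> real \<Rightarrow> 'a set" where
  "slice A f e = {x \<in> A. f x > Sup (f ` A) - e}"

definition is_slice :: "'a::real_normed_vector set \<Rightarrow> 'a set \<Rightarrow> bool" where
  "is_slice A S \<longleftrightarrow> (\<exists>f e. bounded_linear f \<and> e > 0 \<and> S = slice A f e)"

definition is_ccs :: "'a::real_normed_vector set \<Rightarrow> 'a set \<Rightarrow> bool" where
  "is_ccs A V \<longleftrightarrow> (\<exists>(m::nat) (l::nat \<Rightarrow> real) (S::nat \<Rightarrow> 'a set).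
      m \<ge> 1 \<and> (\<forall>i<m. l i > 0 \<and> is_slice A (S i)) \<and> (\<Sum>i<m. l i) = 1 \<and>
      V = {\<Sum>i<m. l i *\<^sub>R x i | x. \<forall>i<m. x i \<in> S i})"

definition SCD_set :: "'a::real_normed_vector set \<Rightarrow> bool" where
  "SCD_set A \<longleftrightarrow> (\<exists>S::nat \<Rightarrow> 'a set. (\<forall>n. is_slice A (S n)) \<and>
      (\<forall>B. B \<subseteq> A \<and> (\<forall>n. B \<inter> S n \<noteq> {}) \<longrightarrow> A \<subseteq> closure (convex hull B)))"

definition weak_topology :: "'a::real_normed_vector topology" where
  "weak_topology = topology_generated_by
     {{x. f x \<in> W} | f W. bounded_linear (f :: 'a \<Rightarrow> real) \<and> open W}"

end

theory Submission
  imports Defs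
begin

lemma INF_add_ge:
  fixes f g :: "_ \<Rightarrow> real"
  assumes "A \<noteq> {}" "B \<noteq> {}" "\<And>a b. a\<in>A \<Longrightarrow> b\<in>B \<Longrightarrow> c \<le> f a + g b"
  shows "c \<le> (INF a\<in>A. f a) + (INF b\<in>B. g b)"
proof -
  have "c - (INF a\<in>A. f a) \<le> g b" if "b \<in> B" for b
  proof -
    have "c - g b \<le> (INF a\<in>A. f a)"
      by (rule cINF_greatest) (use assms that in \<open>auto simp: algebra_simps\<close>)
    then show ?thesis by simp
  qed
  then have "c - (INF a\<in>A. f a) \<le> (INF b\<in>B. g b)"
    by (intro cINF_greatest assms)
  then show ?thesis by simp
qed

lemma INF_scale_ge:
  fixes f :: "_ \<Rightarrow> real"
  assumes "A \<noteq> {}" "s > 0" "\<And>a. a\<in>A \<Longrightarrow> c \<le> s * f a"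
  shows "c \<le> s * (INF a\<in>A. f a)"
proof -
  have "c / s \<le> (INF a\<in>A. f a)"
    by (rule cINF_greatest) (use assms in \<open>auto simp: divide_simps mult.commute\<close>)
  then show ?thesis using assms(2) by (simp add: divide_simps mult.commute)
qed

definition sublin :: "('a::real_vector \<Rightarrow> real) \<Rightarrow> bool" where
  "sublin p \<longleftrightarrow> (\<forall>x y. p (x + y) \<le> p x + p y) \<and> (\<forall>s x. s > 0 \<longrightarrow> p (s *\<^sub>R x) \<le> s * p x)"

lemma sublin_add: "sublin p \<Longrightarrow> p (x + y) \<le> p x + p y"
  unfolding sublin_def by blast

lemma sublin_le: "sublin p \<Longrightarrow> s > 0 \<Longrightarrow> p (s *\<^sub>R x) \<le> s * p x"
  unfolding sublin_def by blast

lemma sublin_eq: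
  assumes "sublin p" "s > 0" shows "p (s *\<^sub>R x) = s * p x"
proof -
  have "p x = p (inverse s *\<^sub>R (s *\<^sub>R x))" using assms by simp
  also have "\<dots> \<le> inverse s * p (s *\<^sub>R x)" using assms by (intro sublin_le) auto
  finally have "s * p x \<le> p (s *\<^sub>R x)" using assms(2) by (simp add: field_simps)
  then show ?thesis using sublin_le[OF assms(1,2), of x] by linarith
qed

lemma sublin_zero: assumes "sublin p" shows "p 0 = 0"
proof -
  have "p ((2::real) *\<^sub>R 0) = 2 * p 0" by (rule sublin_eq[OF assms]) auto
  then show ?thesis by simp
qed

lemma sublin_neg: assumes "sublin p" shows "0 \<le> p x + p (-x)"
  using sublin_add[OF assms, of x "-x"] sublin_zero[OF assms] by simp

lemma sublin_min_linear:
  fixes q :: "'a::real_vector \<Rightarrow> real"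
  assumes q: "sublin q" and min: "\<And>r. sublin r \<Longrightarrow> (\<forall>x. r x \<le> q x) \<Longrightarrow> r = q"
  shows "linear q"
proof -
  have neg: "q (-y) = - q y" for y
  proof -
    define r where "r x = (INF t\<in>{0::real..}. q (x + t *\<^sub>R y) - t * q y)" for x
    have low: "- q (-x) \<le> q (x + t *\<^sub>R y) - t * q y" if "t \<ge> 0" for x t
    proof -
      have "q (t *\<^sub>R y) \<le> q (x + t *\<^sub>R y) + q (-x)"
        using sublin_add[OF q, of "x + t *\<^sub>R y" "-x"] by simp
      moreover have "t * q y \<le> q (t *\<^sub>R y)"
      proof (cases "t = 0")
        case True then show ?thesis using sublin_zero[OF q] by simp
      next
        case False then show ?thesis using sublin_eq[OF q, of t y] that by simp
      qed
      ultimately show ?thesis by linarith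
    qed
    have bdd: "bdd_below ((\<lambda>t. q (x + t *\<^sub>R y) - t * q y) ` {0..})" for x
      using low by (intro bdd_belowI[where m="- q (-x)"]) auto
    have rle: "r x \<le> q (x + t *\<^sub>R y) - t * q y" if "t \<ge> 0" for x t
      unfolding r_def by (rule cINF_lower[OF bdd]) (use that in auto)
    have "sublin r"
      unfolding sublin_def
    proof (intro conjI allI impI)
      fix x z
      show "r (x + z) \<le> r x + r z"
        unfolding r_def
      proof (rule INF_add_ge)
        fix a b :: real assume ab: "a \<in> {0..}" "b \<in> {0..}"
        have "(INF t\<in>{0::real..}. q (x + z + t *\<^sub>R y) - t * q y) \<le> q (x + z + (a+b) *\<^sub>R y) - (a+b) * q y"
          using rle[of "a+b" "x+z"] ab unfolding r_def by auto
        also have "\<dots> \<le> (q (x + a *\<^sub>R y) - a * q y) + (q (z + b *\<^sub>R y) - b * q y)"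
          using sublin_add[OF q, of "x + a *\<^sub>R y" "z + b *\<^sub>R y"]
          by (simp add: algebra_simps scaleR_add_left)
        finally show "(INF t\<in>{0::real..}. q (x + z + t *\<^sub>R y) - t * q y) \<le> (q (x + a *\<^sub>R y) - a * q y) + (q (z + b *\<^sub>R y) - b * q y)" .
      qed auto
    next
      fix s :: real and x assume s: "s > 0"
      show "r (s *\<^sub>R x) \<le> s * r x"
        unfolding r_def
      proof (rule INF_scale_ge)
        fix a :: real assume a: "a \<in> {0..}"
        have "(INF t\<in>{0::real..}. q (s *\<^sub>R x + t *\<^sub>R y) - t * q y) \<le> q (s *\<^sub>R x + (s*a) *\<^sub>R y) - (s*a) * q y"
          using rle[of "s*a" "s *\<^sub>R x"] a s unfolding r_def by auto
        also have "q (s *\<^sub>R x + (s*a) *\<^sub>R y) - (s*a) * q y = s * (q (x + a *\<^sub>R y) - a * q y)"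
        proof -
          have e: "s *\<^sub>R x + (s*a) *\<^sub>R y = s *\<^sub>R (x + a *\<^sub>R y)" by (simp add: scaleR_add_right)
          show ?thesis unfolding e sublin_eq[OF q s] by (simp add: algebra_simps)
        qed
        finally show "(INF t\<in>{0::real..}. q (s *\<^sub>R x + t *\<^sub>R y) - t * q y) \<le> s * (q (x + a *\<^sub>R y) - a * q y)" .
      qed (use s in auto)
    qed
    moreover have "\<forall>x. r x \<le> q x" using rle[of 0] by auto
    ultimately have "r = q" by (rule min)
    then have "q (-y) \<le> q (-y + 1 *\<^sub>R y) - 1 * q y" using rle[of 1 "-y"] by simp
    then have "q (-y) \<le> - q y" using sublin_zero[OF q] by simp
    then show ?thesis using sublin_neg[OF q, of y] by linarith
  qed
  have add: "q (x + z) = q x + q z" for x z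
  proof -
    have "q x \<le> q (x + z) + q (-z)" using sublin_add[OF q, of "x+z" "-z"] by simp
    then show ?thesis using neg[of z] sublin_add[OF q, of x z] by linarith
  qed
  have scl: "q (c *\<^sub>R x) = c * q x" for c x
  proof -
    consider "c > 0" | "c = 0" | "c < 0" by linarith
    then show ?thesis
    proof cases
      case 1 then show ?thesis by (rule sublin_eq[OF q])
    next
      case 2 then show ?thesis using sublin_zero[OF q] by simp
    next
      case 3
      have "q (c *\<^sub>R x) = q (- ((-c) *\<^sub>R x))" by simp
      also have "\<dots> = - q ((-c) *\<^sub>R x)" by (rule neg)
      also have "\<dots> = c * q x" using sublin_eq[OF q, of "-c" x] 3 by simp
      finally show ?thesis .
    qed
  qed
  show ?thesis by (rule linearI) (auto simp: add scl)
qed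

lemma hahn_banach_sublin:
  fixes p :: "'a::real_vector \<Rightarrow> real"
  assumes p: "sublin p"
  shows "\<exists>f. linear f \<and> (\<forall>x. f x \<le> p x)"
proof -
  define Sb where "Sb = {q. sublin q \<and> (\<forall>x. q x \<le> p x)}"
  define P where "P = (\<lambda>q1 q2 :: 'a \<Rightarrow> real. \<forall>x::'a. q2 x \<le> q1 x)"
  have po: "partial_order_on Sb (relation_of P Sb)"
    unfolding partial_order_on_def preorder_on_def refl_on_def trans_def antisym_def relation_of_def P_def
    by (auto intro!: ext intro: order_trans antisym)
  have ch: "\<exists>u\<in>Sb. \<forall>a\<in>C. P a u" if C: "C \<in> Chains (relation_of P Sb)" for C
  proof (cases "C = {}")
    case True then show ?thesis using p unfolding Sb_def by auto
  next
    case False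
    have CS: "C \<subseteq> Sb" using C unfolding Chains_def relation_of_def by auto
    have comp: "P a b \<or> P b a" if "a \<in> C" "b \<in> C" for a b
      using C that unfolding Chains_def relation_of_def by auto
    define u where "u x = (INF q\<in>C. q x)" for x
    have bdd: "bdd_below ((\<lambda>q. q x) ` C)" for x
    proof (rule bdd_belowI[where m="- p (-x)"])
      fix y assume "y \<in> (\<lambda>q. q x) ` C"
      then obtain q where "q \<in> C" "y = q x" by auto
      then have "sublin q" "q (-x) \<le> p (-x)" using CS unfolding Sb_def by auto
      then show "- p (-x) \<le> y" using sublin_neg[of q x] \<open>y = q x\<close> by linarith
    qed
    have ule: "u x \<le> q x" if "q \<in> C" for q x
      unfolding u_def by (rule cINF_lower[OF bdd that])
    have "sublin u"
      unfolding sublin_def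
    proof (intro conjI allI impI)
      fix x y
      show "u (x + y) \<le> u x + u y"
        unfolding u_def
      proof (rule INF_add_ge)
        fix a b assume ab: "a \<in> C" "b \<in> C"
        have sa: "sublin a" "sublin b" using ab CS unfolding Sb_def by auto
        from comp[OF ab] show "(INF q\<in>C. q (x + y)) \<le> a x + b y"
        proof
          assume "P a b"
          then have "b x \<le> a x" unfolding P_def by auto
          then show ?thesis using ule[OF ab(2), of "x+y"] sublin_add[OF sa(2), of x y] unfolding u_def by linarith
        next
          assume "P b a"
          then have "a y \<le> b y" unfolding P_def by auto
          then show ?thesis using ule[OF ab(1), of "x+y"] sublin_add[OF sa(1), of x y] unfolding u_def by linarith
        qed
      qed (use False in auto)
    next
      fix s :: real and x assume s: "s > 0"
      show "u (s *\<^sub>R x) \<le> s * u x"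
        unfolding u_def
      proof (rule INF_scale_ge)
        fix a assume a: "a \<in> C"
        then have "sublin a" using CS unfolding Sb_def by auto
        then show "(INF q\<in>C. q (s *\<^sub>R x)) \<le> s * a x"
          using ule[OF a, of "s *\<^sub>R x"] sublin_le[of a s x] s unfolding u_def by linarith
      qed (use s False in auto)
    qed
    moreover have "u x \<le> p x" for x
    proof -
      obtain q where "q \<in> C" using False by auto
      moreover have "q x \<le> p x" using \<open>q \<in> C\<close> CS unfolding Sb_def by auto
      ultimately show ?thesis using ule[of q x] by linarith
    qed
    ultimately have "u \<in> Sb" unfolding Sb_def by auto
    moreover have "\<forall>a\<in>C. P a u" unfolding P_def using ule by auto
    ultimately show ?thesis by blast
  qed
  obtain m where m: "m \<in> Sb" "\<forall>a\<in>Sb. P m a \<longrightarrow> a = m"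
    using predicate_Zorn[OF po ch] by blast
  have "linear m"
  proof (rule sublin_min_linear)
    show "sublin m" using m unfolding Sb_def by auto
    fix r
    assume r: "sublin r" "\<forall>x. r x \<le> m x"
    have "\<forall>x. r x \<le> p x" using r(2) m(1) unfolding Sb_def by (auto intro: order_trans)
    then have "r \<in> Sb" using r(1) unfolding Sb_def by auto
    then show "r = m" using m(2) r(2) unfolding P_def by auto
  qed
  then show ?thesis using m unfolding Sb_def by auto
qed


lemma separation_point:
  fixes x :: "'a::real_normed_vector"
  assumes C: "convex C" "C \<noteq> {}" and x: "x \<notin> closure C"
  shows "\<exists>(g::'a \<Rightarrow> real) (\<delta>::real). bounded_linear g \<and> \<delta> > 0 \<and> (\<forall>c\<in>C. g x + \<delta> \<le> g c)"
proof -
  obtain \<delta> where d: "\<delta> > 0" "\<And>c. c \<in> C \<Longrightarrow> \<delta> \<le> norm (c - x)"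
    using x unfolding closure_approachable by (auto simp: dist_norm not_less)
  define p where "p z = (INF wt \<in> C \<times> {0::real..}. norm (z + snd wt *\<^sub>R (fst wt - x)) - snd wt * \<delta>)" for z
  have low: "- norm z \<le> norm (z + t *\<^sub>R (c - x)) - t * \<delta>" if "c \<in> C" "t \<ge> 0" for z c t
  proof -
    have "t * \<delta> \<le> t * norm (c - x)" using d(2)[OF that(1)] that(2) by (simp add: mult_left_mono)
    also have "\<dots> = norm (t *\<^sub>R (c - x))" using that(2) by simp
    also have "\<dots> \<le> norm (z + t *\<^sub>R (c - x)) + norm z" using norm_triangle_ineq4[of "z + t *\<^sub>R (c - x)" z] by simp
    finally show ?thesis by simp
  qed
  have bdd: "bdd_below ((\<lambda>wt. norm (z + snd wt *\<^sub>R (fst wt - x)) - snd wt * \<delta>) ` (C \<times> {0::real..}))" for z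
    using low by (intro bdd_belowI[where m="- norm z"]) auto
  have ple: "p z \<le> norm (z + t *\<^sub>R (c - x)) - t * \<delta>" if "c \<in> C" "t \<ge> 0" for z c t
    unfolding p_def using cINF_lower[OF bdd, of "(c,t)" z] that by auto
  have ne: "C \<times> {0::real..} \<noteq> {}" using C(2) by auto
  have "sublin p"
    unfolding sublin_def
  proof (intro conjI allI impI)
    fix z1 z2
    show "p (z1 + z2) \<le> p z1 + p z2"
      unfolding p_def
    proof (rule INF_add_ge[OF ne ne])
      fix a b assume ab: "a \<in> C \<times> {0::real..}" "b \<in> C \<times> {0::real..}"
      obtain c1 t1 where a: "a = (c1, t1)" "c1 \<in> C" "t1 \<ge> 0" using ab by auto
      obtain c2 t2 where b: "b = (c2, t2)" "c2 \<in> C" "t2 \<ge> 0" using ab by auto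
      have key: "p (z1 + z2) \<le> (norm (z1 + t1 *\<^sub>R (c1 - x)) - t1 * \<delta>) + (norm (z2 + t2 *\<^sub>R (c2 - x)) - t2 * \<delta>)"
      proof (cases "t1 + t2 = 0")
        case True
        then have "t1 = 0" "t2 = 0" using a b by auto
        then show ?thesis using ple[OF a(2), of 0 "z1+z2"] norm_triangle_ineq[of z1 z2] by simp
      next
        case False
        then have tp: "t1 + t2 > 0" using a b by auto
        define c where "c = (t1 / (t1+t2)) *\<^sub>R c1 + (t2 / (t1+t2)) *\<^sub>R c2"
        have cC: "c \<in> C" unfolding c_def
          using C(1) a b tp by (intro convexD) (auto simp: divide_simps)
        have e1: "(t1 + t2) *\<^sub>R c = t1 *\<^sub>R c1 + t2 *\<^sub>R c2"
          using tp unfolding c_def by (simp add: scaleR_add_right)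
        have eq: "(t1 + t2) *\<^sub>R (c - x) = t1 *\<^sub>R (c1 - x) + t2 *\<^sub>R (c2 - x)"
          unfolding scaleR_diff_right e1 by (simp add: scaleR_add_left)
        have "p (z1 + z2) \<le> norm (z1 + z2 + (t1 + t2) *\<^sub>R (c - x)) - (t1 + t2) * \<delta>"
          using ple[OF cC, of "t1+t2"] tp by simp
        also have "z1 + z2 + (t1 + t2) *\<^sub>R (c - x) = (z1 + t1 *\<^sub>R (c1 - x)) + (z2 + t2 *\<^sub>R (c2 - x))"
          unfolding eq by (simp add: algebra_simps)
        finally show ?thesis using norm_triangle_ineq[of "z1 + t1 *\<^sub>R (c1 - x)" "z2 + t2 *\<^sub>R (c2 - x)"]
          by (simp add: algebra_simps)
      qed
      show "(INF wt\<in>C \<times> {0..}. norm (z1 + z2 + snd wt *\<^sub>R (fst wt - x)) - snd wt * \<delta>)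
         \<le> norm (z1 + snd a *\<^sub>R (fst a - x)) - snd a * \<delta> + (norm (z2 + snd b *\<^sub>R (fst b - x)) - snd b * \<delta>)"
        using key unfolding p_def a(1) b(1) by simp
    qed
  next
    fix s :: real and z assume s: "s > 0"
    show "p (s *\<^sub>R z) \<le> s * p z"
      unfolding p_def
    proof (rule INF_scale_ge[OF ne s])
      fix a assume a: "a \<in> C \<times> {0::real..}"
      obtain c t where at: "a = (c, t)" "c \<in> C" "t \<ge> 0" using a by auto
      have "p (s *\<^sub>R z) \<le> norm (s *\<^sub>R z + (s * t) *\<^sub>R (c - x)) - (s * t) * \<delta>"
        using ple[OF at(2), of "s*t"] at s by simp
      also have "s *\<^sub>R z + (s * t) *\<^sub>R (c - x) = s *\<^sub>R (z + t *\<^sub>R (c - x))" by (simp add: scaleR_add_right)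
      also have "norm (s *\<^sub>R (z + t *\<^sub>R (c - x))) - (s * t) * \<delta> = s * (norm (z + t *\<^sub>R (c - x)) - t * \<delta>)"
        using s by (simp only: norm_scaleR abs_of_pos[OF s] right_diff_distrib mult.assoc)
      finally show "(INF wt\<in>C \<times> {0..}. norm (s *\<^sub>R z + snd wt *\<^sub>R (fst wt - x)) - snd wt * \<delta>)
         \<le> s * (norm (z + snd a *\<^sub>R (fst a - x)) - snd a * \<delta>)"
        unfolding p_def at(1) by simp
    qed
  qed
  then obtain f where f: "linear f" "\<And>z. f z \<le> p z" using hahn_banach_sublin by blast
  obtain c0 where c0: "c0 \<in> C" using C(2) by auto
  have fn: "f z \<le> norm z" for z using f(2)[of z] ple[OF c0, of 0 z] by simp
  have "bounded_linear f"
  proof (rule bounded_linear_intro[where K=1])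
    show "f (a + b) = f a + f b" for a b using f(1) by (simp add: linear_add)
    show "f (r *\<^sub>R a) = r *\<^sub>R f a" for r a using f(1) by (simp add: linear_scale)
    show "norm (f a) \<le> norm a * 1" for a
      using fn[of a] fn[of "-a"] linear_neg[OF f(1), of a] by auto
  qed
  moreover have "\<forall>c\<in>C. f x + \<delta> \<le> f c"
  proof
    fix c assume c: "c \<in> C"
    have "f (x - c) \<le> norm (x - c + 1 *\<^sub>R (c - x)) - 1 * \<delta>" using f(2)[of "x-c"] ple[OF c, of 1 "x - c"] by simp
    then have "f (x - c) \<le> - \<delta>" by simp
    then show "f x + \<delta> \<le> f c" using linear_diff[OF f(1)] by simp
  qed
  ultimately show ?thesis using d(1) by (intro exI[of _ f] exI[of _ \<delta>]) auto
qed


lemma slice_subset: "slice A f e \<subseteq> A"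
  unfolding slice_def by auto

lemma is_slice_subset: "is_slice A S \<Longrightarrow> S \<subseteq> A"
  unfolding is_slice_def using slice_subset by blast

lemma bdd_above_linear_image:
  fixes A :: "'a::real_normed_vector set" and f :: "'a \<Rightarrow> real"
  assumes "bounded A" "bounded_linear f"
  shows "bdd_above (f ` A)" "bdd_below (f ` A)"
  using bounded_linear_image[OF assms] bounded_imp_bdd_above bounded_imp_bdd_below by auto

lemma slice_nonempty:
  fixes A :: "'a::real_normed_vector set" and f :: "'a \<Rightarrow> real"
  assumes "A \<noteq> {}" "bounded A" "bounded_linear f" "e > 0"
  shows "slice A f e \<noteq> {}"
proof -
  have "Sup (f ` A) - e < Sup (f ` A)" using assms(4) by simp
  then obtain y where "y \<in> f ` A" "Sup (f ` A) - e < y"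
    using less_cSup_iff[of "f ` A"] assms(1) bdd_above_linear_image[OF assms(2,3)] by auto
  then show ?thesis unfolding slice_def by auto
qed

lemma is_slice_nonempty:
  fixes A :: "'a::real_normed_vector set"
  assumes "A \<noteq> {}" "bounded A" "is_slice A S"
  shows "S \<noteq> {}"
  using assms slice_nonempty unfolding is_slice_def by blast

lemma weak_open_halfspace:
  fixes g :: "'a::real_normed_vector \<Rightarrow> real"
  assumes "bounded_linear g"
  shows "openin weak_topology {y. g y < a}"
proof -
  have "{y. g y < a} = {y. g y \<in> {..<a}}" by auto
  also have "openin weak_topology \<dots>"
    unfolding weak_topology_def
    by (rule topology_generated_by_Basis) (use assms in \<open>auto intro!: exI[of _ g] exI[of _ "{..<a}"]\<close>)
  finally show ?thesis .
qed

lemma weak_open_nbhd: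
  fixes Ow :: "'a::real_normed_vector set"
  assumes "openin weak_topology Ow" "x \<in> Ow"
  shows "\<exists>k (g::nat \<Rightarrow> 'a \<Rightarrow> real) (\<epsilon>::real). (\<forall>j<k. bounded_linear (g j)) \<and> \<epsilon> > 0 \<and>
           {y. \<forall>j<k. \<bar>g j y - g j x\<bar> < \<epsilon>} \<subseteq> Ow"
proof -
  have "generate_topology_on {{x. f x \<in> W} | f W. bounded_linear (f :: 'a \<Rightarrow> real) \<and> open W} Ow"
    using assms(1) unfolding weak_topology_def openin_topology_generated_by_iff .
  then show ?thesis using assms(2)
  proof (induction arbitrary: x)
    case Empty then show ?case by simp
  next
    case (Int a b)
    have xab: "x \<in> a" "x \<in> b" using Int.prems by auto
    obtain k1 and g1 :: "nat \<Rightarrow> 'a \<Rightarrow> real" and e1 :: real where 1: "\<forall>j<k1. bounded_linear (g1 j)" "e1 > 0" "{y. \<forall>j<k1. \<bar>g1 j y - g1 j x\<bar> < e1} \<subseteq> a"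
      using Int.IH(1)[OF xab(1)] by blast
    obtain k2 and g2 :: "nat \<Rightarrow> 'a \<Rightarrow> real" and e2 :: real where 2: "\<forall>j<k2. bounded_linear (g2 j)" "e2 > 0" "{y. \<forall>j<k2. \<bar>g2 j y - g2 j x\<bar> < e2} \<subseteq> b"
      using Int.IH(2)[OF xab(2)] by blast
    define g where "g j = (if j < k1 then g1 j else g2 (j - k1))" for j
    have "\<forall>j<k1+k2. bounded_linear (g j)" using 1 2 unfolding g_def by auto
    moreover have "min e1 e2 > 0" using 1 2 by auto
    moreover have "{y. \<forall>j<k1+k2. \<bar>g j y - g j x\<bar> < min e1 e2} \<subseteq> a \<inter> b"
    proof
      fix y assume y: "y \<in> {y. \<forall>j<k1+k2. \<bar>g j y - g j x\<bar> < min e1 e2}"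
      have "\<forall>j<k1. \<bar>g1 j y - g1 j x\<bar> < e1"
      proof (intro allI impI)
        fix j assume "j < k1" then show "\<bar>g1 j y - g1 j x\<bar> < e1" using y[simplified, rule_format, of j] unfolding g_def by auto
      qed
      moreover have "\<forall>j<k2. \<bar>g2 j y - g2 j x\<bar> < e2"
      proof (intro allI impI)
        fix j assume "j < k2" then show "\<bar>g2 j y - g2 j x\<bar> < e2" using y[simplified, rule_format, of "j + k1"] unfolding g_def by auto
      qed
      ultimately show "y \<in> a \<inter> b" using 1(3) 2(3) by auto
    qed
    ultimately show ?case by blast
  next
    case (UN K)
    then obtain k where "k \<in> K" "x \<in> k" by auto
    then show ?case using UN(2)[of k x] by blast
  next
    case (Basis s)
    then obtain f :: "'a \<Rightarrow> real" and W :: "real set" where fW: "s = {x. f x \<in> W}" "bounded_linear f" "open W" by auto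
    then have "f x \<in> W" using Basis by auto
    then obtain e where e: "e > 0" "ball (f x) e \<subseteq> W" using fW(3) openE by blast
    define g where "g = (\<lambda>j::nat. f)"
    have "{y. \<forall>j<1. \<bar>g j y - g j x\<bar> < e} \<subseteq> s"
      using e(2) unfolding fW(1) g_def by (auto simp: dist_real_def subset_iff)
    then show ?case using fW(2) e(1) unfolding g_def
      by (intro exI[of _ "1::nat"] exI[of _ "\<lambda>j::nat. f"] exI[of _ e]) auto
  qed
qed

lemma backward:
  fixes A :: "'a::real_normed_vector set" and V :: "nat \<Rightarrow> 'a set"
  assumes V: "\<forall>n. is_ccs A (V n)"
    and U: "\<forall>U. openin (subtopology weak_topology A) U \<and> U \<noteq> {} \<longrightarrow> (\<exists>n. V n \<subseteq> U)"
  shows "SCD_set A"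
proof -
  define P where "P n t \<longleftrightarrow> fst t \<ge> 1 \<and> (\<forall>i<fst t. fst (snd t) i > 0 \<and> is_slice A (snd (snd t) i)) \<and>
      (\<Sum>i<fst t. fst (snd t) i) = 1 \<and>
      V n = {\<Sum>i<fst t. fst (snd t) i *\<^sub>R x i | x. \<forall>i<fst t. x i \<in> snd (snd t) i}"
    for n and t :: "nat \<times> (nat \<Rightarrow> real) \<times> (nat \<Rightarrow> 'a set)"
  have "\<forall>n. \<exists>t. P n t"
  proof
    fix n
    obtain m :: nat and l :: "nat \<Rightarrow> real" and S :: "nat \<Rightarrow> 'a set" where "m \<ge> 1 \<and> (\<forall>i<m. l i > 0 \<and> is_slice A (S i)) \<and> (\<Sum>i<m. l i) = 1 \<and>
          V n = {\<Sum>i<m. l i *\<^sub>R x i | x. \<forall>i<m. x i \<in> S i}"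
      using V unfolding is_ccs_def by blast
    then have "P n (m, l, S)" unfolding P_def by simp
    then show "\<exists>t. P n t" ..
  qed
  from choice[OF this] obtain F where F: "\<And>n. P n (F n)" by blast
  define mm where "mm n = fst (F n)" for n
  define ll where "ll n = fst (snd (F n))" for n
  define SS where "SS n = snd (snd (F n))" for n
  have M: "\<And>n. mm n \<ge> 1" "\<And>n i. i < mm n \<Longrightarrow> ll n i > 0"
    "\<And>n i. i < mm n \<Longrightarrow> is_slice A (SS n i)" "\<And>n. (\<Sum>i<mm n. ll n i) = 1"
    "\<And>n. V n = {\<Sum>i<mm n. ll n i *\<^sub>R x i | x. \<forall>i<mm n. x i \<in> SS n i}"
    using F unfolding P_def mm_def ll_def SS_def by auto
  define T where "T k = (case prod_decode k of (n, i) \<Rightarrow> if i < mm n then SS n i else SS n 0)" for k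
  have Tsl: "is_slice A (T k)" for k
  proof -
    obtain n i where "prod_decode k = (n, i)" by (cases "prod_decode k")
    then show ?thesis unfolding T_def using M(1)[of n] by (auto intro: M(3))
  qed
  have Tni: "T (prod_encode (n, i)) = SS n i" if "i < mm n" for n i
    using that unfolding T_def by simp
  show ?thesis
    unfolding SCD_set_def
  proof (intro exI[of _ T] conjI allI impI)
    show "is_slice A (T n)" for n by (rule Tsl)
    fix B assume B: "B \<subseteq> A \<and> (\<forall>n. B \<inter> T n \<noteq> {})"
    show "A \<subseteq> closure (convex hull B)"
    proof
      fix x assume xA: "x \<in> A"
      show "x \<in> closure (convex hull B)"
      proof (rule ccontr)
        assume nx: "x \<notin> closure (convex hull B)"
        have "B \<noteq> {}" using B by auto
        then have "convex hull B \<noteq> {}" by simp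
        then obtain g :: "'a \<Rightarrow> real" and \<delta> :: real where g: "bounded_linear g" "\<delta> > 0" "\<forall>c\<in>convex hull B. g x + \<delta> \<le> g c"
          using separation_point[OF convex_convex_hull _ nx] by blast
        define W where "W = {y. g y < g x + \<delta>}"
        have "openin (subtopology weak_topology A) (W \<inter> A)"
          unfolding openin_subtopology W_def using weak_open_halfspace[OF g(1)] by blast
        moreover have "x \<in> W \<inter> A" using xA g(2) unfolding W_def by auto
        then have "W \<inter> A \<noteq> {}" by blast
        ultimately obtain n where n: "V n \<subseteq> W \<inter> A" using U by blast
        have "\<forall>i. \<exists>b. i < mm n \<longrightarrow> b \<in> B \<inter> SS n i"
          using B Tni by (metis all_not_in_conv)
        then obtain b where b: "\<And>i. i < mm n \<Longrightarrow> b i \<in> B \<inter> SS n i" by metis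
        define s where "s = (\<Sum>i<mm n. ll n i *\<^sub>R b i)"
        have "s \<in> V n" unfolding M(5) s_def using b by blast
        then have "g s < g x + \<delta>" using n unfolding W_def by auto
        moreover have "s \<in> convex hull B"
          unfolding s_def
          by (rule convex_sum) (use M(2,4) b hull_subset[of B convex] in \<open>auto simp: less_imp_le\<close>)
        ultimately show False using g(3) by force
      qed
    qed
  qed
qed


definition Qf :: "(nat \<Rightarrow> 'a \<Rightarrow> real) \<Rightarrow> nat \<Rightarrow> 'a \<Rightarrow> real" where
  "Qf g k u = (\<Sum>j<k. (g j u)\<^sup>2)"

definition Bf :: "(nat \<Rightarrow> 'a \<Rightarrow> real) \<Rightarrow> nat \<Rightarrow> 'a \<Rightarrow> 'a \<Rightarrow> real" where
  "Bf g k v u = (\<Sum>j<k. g j v * g j u)"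

lemma unif_bound_gen:
  fixes g :: "nat \<Rightarrow> 'a::real_normed_vector \<Rightarrow> real"
  shows "\<forall>j<k. bounded_linear (g j) \<Longrightarrow> \<exists>K>0. \<forall>j<k. \<forall>u. \<bar>g j u\<bar> \<le> norm u * K"
proof (induction k)
  case 0 then show ?case by (intro exI[of _ 1]) auto
next
  case (Suc k)
  then obtain K where K: "K > 0" "\<forall>j<k. \<forall>u. \<bar>g j u\<bar> \<le> norm u * K" by auto
  obtain K2 where K2: "K2 > 0" "\<forall>u. norm (g k u) \<le> norm u * K2"
    using bounded_linear.pos_bounded[of "g k"] Suc.prems by auto
  have "\<forall>j<Suc k. \<forall>u. \<bar>g j u\<bar> \<le> norm u * max K K2"
  proof (intro allI impI)
    fix j u assume "j < Suc k"
    then consider "j < k" | "j = k" by linarith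
    then show "\<bar>g j u\<bar> \<le> norm u * max K K2"
    proof cases
      case 1
      have "norm u * K \<le> norm u * max K K2" by (intro mult_left_mono) auto
      then show ?thesis using K(2) 1 by (meson order_trans)
    next
      case 2
      have "norm u * K2 \<le> norm u * max K K2" by (intro mult_left_mono) auto
      then show ?thesis using K2(2)[rule_format, of u] 2 by simp
    qed
  qed
  then show ?case using K(1) by (intro exI[of _ "max K K2"]) auto
qed

context
  fixes g :: "nat \<Rightarrow> 'a::real_normed_vector \<Rightarrow> real" and k :: nat
  assumes gl: "\<forall>j<k. bounded_linear (g j)"
begin

lemma gadd: "j < k \<Longrightarrow> g j (a + b) = g j a + g j b"
  using gl bounded_linear.linear linear_add by blast

lemma gdiff: "j < k \<Longrightarrow> g j (a - b) = g j a - g j b"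
  using gl bounded_linear.linear linear_diff by blast

lemma gscale: "j < k \<Longrightarrow> g j (c *\<^sub>R a) = c * g j a"
  using gl bounded_linear.linear linear_scale by fastforce

lemma gsum: "j < k \<Longrightarrow> g j (\<Sum>i\<in>I. f i) = (\<Sum>i\<in>I. g j (f i))"
  using gl bounded_linear.linear linear_sum by blast

lemma Qf_nonneg: "0 \<le> Qf g k u"
  unfolding Qf_def by (intro sum_nonneg) auto

lemma Bf_self: "Bf g k u u = Qf g k u"
  unfolding Qf_def Bf_def by (simp add: power2_eq_square)

lemma Bf_sym: "Bf g k u v = Bf g k v u"
  unfolding Bf_def by (simp add: mult.commute)

lemma Bf_add: "Bf g k v (a + b) = Bf g k v a + Bf g k v b"
  unfolding Bf_def by (simp add: gadd distrib_left sum.distrib)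

lemma Bf_diff: "Bf g k v (a - b) = Bf g k v a - Bf g k v b"
  unfolding Bf_def by (simp add: gdiff right_diff_distrib sum_subtractf)

lemma Bf_scale: "Bf g k v (c *\<^sub>R a) = c * Bf g k v a"
  unfolding Bf_def by (simp add: gscale sum_distrib_left algebra_simps)

lemma Qf_add: "Qf g k (a + b) = Qf g k a + 2 * Bf g k a b + Qf g k b"
proof -
  have "Qf g k (a + b) = (\<Sum>j<k. (g j a)\<^sup>2 + 2 * (g j a * g j b) + (g j b)\<^sup>2)"
    unfolding Qf_def by (intro sum.cong) (auto simp: gadd power2_eq_square algebra_simps)
  then show ?thesis unfolding Qf_def Bf_def by (simp add: sum.distrib sum_distrib_left)
qed

lemma Qf_diff: "Qf g k (a - b) = Qf g k a - 2 * Bf g k a b + Qf g k b"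
proof -
  have "Qf g k (a - b) = (\<Sum>j<k. (g j a)\<^sup>2 - 2 * (g j a * g j b) + (g j b)\<^sup>2)"
    unfolding Qf_def by (intro sum.cong) (auto simp: gdiff power2_eq_square algebra_simps)
  then show ?thesis unfolding Qf_def Bf_def by (simp add: sum.distrib sum_subtractf sum_distrib_left)
qed

lemma Qf_scale: "Qf g k (c *\<^sub>R a) = c\<^sup>2 * Qf g k a"
  unfolding Qf_def by (simp add: gscale sum_distrib_left power_mult_distrib)

lemma Qf_minus_commute: "Qf g k (a - b) = Qf g k (b - a)"
  unfolding Qf_def by (intro sum.cong) (auto simp: gdiff power2_eq_square algebra_simps)

lemma coord_le: "j < k \<Longrightarrow> (g j u)\<^sup>2 \<le> Qf g k u"
  unfolding Qf_def by (rule member_le_sum) auto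

lemma coord_lt: assumes "j < k" "Qf g k u < e\<^sup>2" "e > 0" shows "\<bar>g j u\<bar> < e"
proof -
  have "(g j u)\<^sup>2 < e\<^sup>2" using coord_le[OF assms(1), of u] assms(2) by linarith
  then have "\<bar>g j u\<bar>\<^sup>2 < e\<^sup>2" by (simp only: power2_abs)
  then show ?thesis by (rule power2_less_imp_less) (use assms(3) in simp)
qed

lemma Bf_bl: "bounded_linear (Bf g k v)"
proof -
  have "bounded_linear (\<lambda>u. g j v * g j u)" if "j \<in> {..<k}" for j
    by (rule bounded_linear_const_mult) (use gl that in auto)
  then have "bounded_linear (\<lambda>u. \<Sum>j<k. g j v * g j u)"
    by (rule bounded_linear_sum)
  then show ?thesis unfolding Bf_def[abs_def] .
qed

lemma Bf_abs: assumes "\<forall>j<k. \<bar>g j u\<bar> \<le> e" shows "\<bar>Bf g k v u\<bar> \<le> (\<Sum>j<k. \<bar>g j v\<bar>) * e"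
proof -
  have "\<bar>Bf g k v u\<bar> \<le> (\<Sum>j<k. \<bar>g j v * g j u\<bar>)" unfolding Bf_def by (rule sum_abs)
  also have "\<dots> \<le> (\<Sum>j<k. \<bar>g j v\<bar> * e)"
  proof (rule sum_mono)
    fix j assume "j \<in> {..<k}"
    then have "\<bar>g j u\<bar> \<le> e" using assms by auto
    then show "\<bar>g j v * g j u\<bar> \<le> \<bar>g j v\<bar> * e" unfolding abs_mult by (rule mult_left_mono) simp
  qed
  finally show ?thesis by (simp add: sum_distrib_right)
qed

lemma unif_bound: "\<exists>K>0. \<forall>j<k. \<forall>u. \<bar>g j u\<bar> \<le> norm u * K"
  by (rule unif_bound_gen[OF gl])

lemma Qf_le_norm: assumes "\<forall>j<k. \<forall>u. \<bar>g j u\<bar> \<le> norm u * K" shows "Qf g k u \<le> real k * (norm u * K)\<^sup>2"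
proof -
  have "Qf g k u \<le> (\<Sum>j<k. (norm u * K)\<^sup>2)"
    unfolding Qf_def
  proof (intro sum_mono)
    fix j assume "j \<in> {..<k}"
    then have "\<bar>g j u\<bar> \<le> norm u * K" using assms by auto
    then have "\<bar>g j u\<bar> \<le> \<bar>norm u * K\<bar>" by linarith
    then show "(g j u)\<^sup>2 \<le> (norm u * K)\<^sup>2" by (simp add: abs_le_square_iff)
  qed
  then show ?thesis by simp
qed

lemma Qf_bounded:
  assumes "bounded A"
  shows "\<exists>M\<ge>0. \<forall>a\<in>A. \<forall>b\<in>A. Qf g k (a - b) \<le> M"
proof -
  obtain K where K: "K > 0" "\<forall>j<k. \<forall>u. \<bar>g j u\<bar> \<le> norm u * K" using unif_bound by auto
  obtain R where R: "\<forall>a\<in>A. norm a \<le> R" using assms unfolding bounded_iff by auto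
  have "Qf g k (a - b) \<le> real k * ((2 * R) * K)\<^sup>2" if "a \<in> A" "b \<in> A" for a b
  proof -
    have "norm (a - b) \<le> 2 * R" using R[rule_format, OF that(1)] R[rule_format, OF that(2)] norm_triangle_ineq4[of a b] by linarith
    then have "norm (a - b) * K \<le> 2 * R * K" using K(1) by (simp add: mult_right_mono)
    then have "(norm (a - b) * K)\<^sup>2 \<le> (2 * R * K)\<^sup>2" using K(1) by (intro power_mono) auto
    then have "real k * (norm (a - b) * K)\<^sup>2 \<le> real k * ((2 * R) * K)\<^sup>2" by (intro mult_left_mono) auto
    then show ?thesis using Qf_le_norm[OF K(2), of "a - b"] by linarith
  qed
  then show ?thesis by (intro exI[of _ "real k * ((2 * R) * K)\<^sup>2"]) auto
qed

lemma farthest: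
  assumes A: "bounded A" "A \<noteq> {}" and eta: "\<eta> > 0"
  shows "\<exists>z0\<in>A. \<exists>Sl. is_slice A Sl \<and> Sl \<noteq> {} \<and> (\<forall>z\<in>Sl. Qf g k (z - z0) < 3 * \<eta>) \<and>
           (\<forall>y\<in>A. Qf g k (y - c) < Qf g k (z0 - c) + \<eta>)"
proof -
  obtain K where K: "K > 0" "\<forall>j<k. \<forall>u. \<bar>g j u\<bar> \<le> norm u * K" using unif_bound by auto
  obtain R where R: "\<forall>a\<in>A. norm a \<le> R" using A unfolding bounded_iff by auto
  have bdd: "bdd_above ((\<lambda>z. Qf g k (z - c)) ` A)"
  proof (rule bdd_aboveI)
    fix y assume "y \<in> (\<lambda>z. Qf g k (z - c)) ` A"
    then obtain z where z: "z \<in> A" "y = Qf g k (z - c)" by auto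
    have "norm (z - c) \<le> R + norm c" using R z(1) norm_triangle_ineq4[of z c] by auto
    then have "norm (z - c) * K \<le> (R + norm c) * K" using K(1) by (simp add: mult_right_mono)
    then have "(norm (z - c) * K)\<^sup>2 \<le> ((R + norm c) * K)\<^sup>2" using K(1) by (intro power_mono) auto
    then show "y \<le> real k * ((R + norm c) * K)\<^sup>2"
    proof -
      have "real k * (norm (z - c) * K)\<^sup>2 \<le> real k * ((R + norm c) * K)\<^sup>2"
        using \<open>(norm (z - c) * K)\<^sup>2 \<le> ((R + norm c) * K)\<^sup>2\<close> by (intro mult_left_mono) auto
      then show ?thesis using Qf_le_norm[OF K(2), of "z - c"] z(2) by linarith
    qed
  qed
  define R2 where "R2 = (SUP z\<in>A. Qf g k (z - c))"
  have "R2 - \<eta> < R2" using eta by simp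
  then obtain z0 where z0: "z0 \<in> A" "R2 - \<eta> < Qf g k (z0 - c)"
    unfolding R2_def using less_cSUP_iff[OF A(2) bdd] by blast
  have yR: "Qf g k (y - c) \<le> R2" if "y \<in> A" for y
    unfolding R2_def by (rule cSUP_upper[OF that bdd])
  define h where "h = Bf g k (z0 - c)"
  have hbl: "bounded_linear h" unfolding h_def by (rule Bf_bl)
  define Sl where "Sl = slice A h \<eta>"
  have f1: "is_slice A Sl" unfolding is_slice_def Sl_def using hbl eta by (intro exI[of _ h] exI[of _ \<eta>]) simp
  have f2: "Sl \<noteq> {}" unfolding Sl_def by (rule slice_nonempty[OF A(2,1) hbl eta])
  have f3: "Qf g k (z - z0) < 3 * \<eta>" if z: "z \<in> Sl" for z
  proof -
    have zA: "z \<in> A" and hz: "h z > Sup (h ` A) - \<eta>" using z unfolding Sl_def slice_def by auto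
    have "h z0 \<le> Sup (h ` A)" using z0(1) bdd_above_linear_image(1)[OF A(1) hbl] by (intro cSup_upper) auto
    then have hz2: "h z > h z0 - \<eta>" using hz by linarith
    have "z - z0 = (z - c) - (z0 - c)" by simp
    then have e1: "Qf g k (z - z0) = Qf g k (z - c) - 2 * Bf g k (z - c) (z0 - c) + Qf g k (z0 - c)"
      using Qf_diff[of "z - c" "z0 - c"] by simp
    have e2: "Bf g k (z - c) (z0 - c) = h z - h c"
    proof -
      have "Bf g k (z - c) (z0 - c) = Bf g k (z0 - c) (z - c)" by (rule Bf_sym)
      also have "\<dots> = h z - h c" unfolding h_def by (rule Bf_diff)
      finally show ?thesis .
    qed
    have e3: "h z0 - h c = Qf g k (z0 - c)"
    proof -
      have "h z0 - h c = Bf g k (z0 - c) (z0 - c)" unfolding h_def by (rule Bf_diff[symmetric])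
      also have "\<dots> = Qf g k (z0 - c)" by (rule Bf_self)
      finally show ?thesis .
    qed
    have e4: "Qf g k (z - c) \<le> R2" by (rule yR[OF zA])
    have e5: "Bf g k (z - c) (z0 - c) > Qf g k (z0 - c) - \<eta>" using e2 e3 hz2 by linarith
    show ?thesis using e1 e4 e5 z0(2) by linarith
  qed
  have f4: "\<forall>y\<in>A. Qf g k (y - c) < Qf g k (z0 - c) + \<eta>" using yR z0(2) by fastforce
  have f3': "\<forall>z\<in>Sl. Qf g k (z - z0) < 3 * \<eta>" using f3 by blast
  show ?thesis
  proof (rule bexI[of _ z0])
    show "z0 \<in> A" by (rule z0(1))
    show "\<exists>Sl. is_slice A Sl \<and> Sl \<noteq> {} \<and> (\<forall>z\<in>Sl. Qf g k (z - z0) < 3 * \<eta>) \<and>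
           (\<forall>y\<in>A. Qf g k (y - c) < Qf g k (z0 - c) + \<eta>)"
      by (rule exI[of _ Sl]) (intro conjI f1 f2 f3' f4)
  qed
qed

end


lemma frac_bound:
  fixes M x \<theta> :: real
  assumes "M \<ge> 0" "\<theta> > 0" "x \<le> \<theta> / (4 * (M + 1))"
  shows "M * x \<le> \<theta> / 4"
proof -
  have "M * x \<le> M * (\<theta> / (4 * (M + 1)))" using assms by (intro mult_left_mono) auto
  also have "\<dots> = (\<theta> / 4) * (M / (M + 1))" using assms by (simp add: field_simps)
  also have "\<dots> \<le> (\<theta> / 4) * 1" using assms by (intro mult_left_mono) auto
  finally show ?thesis by simp
qed

context
  fixes g :: "nat \<Rightarrow> 'a::real_normed_vector \<Rightarrow> real" and k :: nat
  assumes gl: "\<forall>j<k. bounded_linear (g j)"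
begin

lemma Qf_neg: "Qf g k (- a) = Qf g k a"
  using Qf_scale[OF gl, of "-1" a] by simp

lemma getD:
  assumes A: "bounded A" "A \<noteq> {}" and eta: "\<eta> > 0" "3 * \<eta> \<le> e\<^sup>2" and e: "e > 0" "2 * e \<le> r"
  shows "\<exists>z0\<in>A. \<exists>z. (z \<in> A \<and> (\<exists>Sl. is_slice A Sl \<and> z \<in> Sl \<and> (\<forall>z'\<in>Sl. \<forall>j<k. \<bar>g j z' - g j z\<bar> < r))) \<and>
          (\<forall>j<k. \<bar>g j (z - z0)\<bar> < e) \<and> (\<forall>y\<in>A. Qf g k (y - c) < Qf g k (z0 - c) + \<eta>)"
proof -
  obtain z0 Sl where z0: "z0 \<in> A" "is_slice A Sl" "Sl \<noteq> {}" "\<forall>z\<in>Sl. Qf g k (z - z0) < 3 * \<eta>"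
      "\<forall>y\<in>A. Qf g k (y - c) < Qf g k (z0 - c) + \<eta>"
    using farthest[OF gl A eta(1), of c] by blast
  obtain z where z: "z \<in> Sl" using z0(3) by auto
  have cl: "\<bar>g j (w - z0)\<bar> < e" if "w \<in> Sl" "j < k" for w j
  proof -
    have "Qf g k (w - z0) < e\<^sup>2" using z0(4) that(1) eta(2) by fastforce
    then show ?thesis using coord_lt[OF gl that(2) _ e(1)] by blast
  qed
  have "\<forall>z'\<in>Sl. \<forall>j<k. \<bar>g j z' - g j z\<bar> < r"
  proof (intro ballI allI impI)
    fix z' j assume zj: "z' \<in> Sl" "j < k"
    have "g j z' - g j z = g j (z' - z0) - g j (z - z0)" using gdiff[OF gl zj(2)] by simp
    then have "\<bar>g j z' - g j z\<bar> \<le> \<bar>g j (z' - z0)\<bar> + \<bar>g j (z - z0)\<bar>" by linarith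
    then show "\<bar>g j z' - g j z\<bar> < r" using cl[OF zj] cl[OF z zj(2)] e(2) by linarith
  qed
  moreover have "z \<in> A" using z z0(2) is_slice_subset by blast
  ultimately show ?thesis
    by (intro bexI[of _ z0] exI[of _ z] conjI) (use z0 z cl in auto)
qed

lemma approx_conv:
  assumes A: "bounded A" "convex A" "x0 \<in> A" and r: "r > 0" and th: "\<theta> > 0"
    and D: "D = {w\<in>A. \<exists>Sl. is_slice A Sl \<and> w \<in> Sl \<and> (\<forall>z\<in>Sl. \<forall>j<k. \<bar>g j z - g j w\<bar> < r)}"
  shows "\<exists>w\<in>convex hull D. Qf g k (w - x0) < \<theta>"
proof (rule ccontr)
  assume "\<not> ?thesis"
  then have far: "\<forall>w\<in>convex hull D. \<theta> \<le> Qf g k (w - x0)" by (auto simp: not_less)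
  have Ane: "A \<noteq> {}" using A(3) by auto
  have getD': "\<exists>z0\<in>A. \<exists>z\<in>D. (\<forall>j<k. \<bar>g j (z - z0)\<bar> < e) \<and> (\<forall>y\<in>A. Qf g k (y - c) < Qf g k (z0 - c) + \<eta>)"
    if cond: "\<eta> > 0" "3 * \<eta> \<le> e\<^sup>2" "e > 0" "2 * e \<le> r" for c \<eta> e
  proof -
    obtain z0 z where zz: "z0 \<in> A" "z \<in> A \<and> (\<exists>Sl. is_slice A Sl \<and> z \<in> Sl \<and> (\<forall>z'\<in>Sl. \<forall>j<k. \<bar>g j z' - g j z\<bar> < r))"
      "\<forall>j<k. \<bar>g j (z - z0)\<bar> < e" "\<forall>y\<in>A. Qf g k (y - c) < Qf g k (z0 - c) + \<eta>"
      using getD[OF A(1) Ane cond, of c] by blast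
    have "z \<in> D" using zz(2) unfolding D by blast
    then show ?thesis using zz by blast
  qed
  have "\<exists>z0\<in>A. \<exists>z\<in>D. True"
    using getD'[of "(r/2)\<^sup>2/3" "r/2" x0] r by (auto simp: power2_eq_square)
  then have Dne: "D \<noteq> {}" by auto
  have DA: "D \<subseteq> A" unfolding D by auto
  have hD: "convex hull D \<subseteq> A" using DA A(2) by (intro hull_minimal) auto
  obtain M where M: "M \<ge> 0" "\<forall>a\<in>A. \<forall>b\<in>A. Qf g k (a - b) \<le> M" using Qf_bounded[OF gl A(1)] by auto
  define d2 where "d2 = (INF w\<in>convex hull D. Qf g k (w - x0))"
  have chne: "convex hull D \<noteq> {}" using Dne by simp
  have bddb: "bdd_below ((\<lambda>w. Qf g k (w - x0)) ` (convex hull D))"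
    using Qf_nonneg[OF gl] by (intro bdd_belowI[where m=0]) auto
  have thd: "\<theta> \<le> d2" unfolding d2_def using far by (intro cINF_greatest[OF chne]) auto
  define t where "t = min 1 (\<theta> / (4 * (M+1)))"
  have t: "t > 0" "t \<le> 1" "M * t \<le> \<theta>/4"
    using th M(1) frac_bound[OF M(1) th, of t] unfolding t_def by auto
  define \<eta>1 where "\<eta>1 = t * \<theta> / 4"
  have eta1: "\<eta>1 > 0" unfolding \<eta>1_def using t th by simp
  have "d2 < d2 + \<eta>1" using eta1 by simp
  then obtain w0 where w0: "w0 \<in> convex hull D" "Qf g k (w0 - x0) < d2 + \<eta>1"
    using cINF_less_iff[OF chne bddb, of "d2 + \<eta>1"] unfolding d2_def by auto
  define v where "v = x0 - w0"
  have Qv: "\<theta> \<le> Qf g k v" using far w0(1) Qf_minus_commute[OF gl, of w0 x0] unfolding v_def by auto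
  have Qv2: "Qf g k v < d2 + \<eta>1" using w0(2) Qf_minus_commute[OF gl, of w0 x0] unfolding v_def by auto
  have sepw: "Bf g k v (w - w0) < \<theta>/4" if w: "w \<in> convex hull D" for w
  proof -
    define u where "u = w - w0"
    have wt: "(1 - t) *\<^sub>R w0 + t *\<^sub>R w \<in> convex hull D"
      using convexD[OF convex_convex_hull w0(1) w, of "1-t" t] t by auto
    have "d2 \<le> Qf g k ((1 - t) *\<^sub>R w0 + t *\<^sub>R w - x0)" unfolding d2_def by (rule cINF_lower[OF bddb wt])
    also have "(1 - t) *\<^sub>R w0 + t *\<^sub>R w - x0 = - (v - t *\<^sub>R u)" unfolding v_def u_def by (simp add: algebra_simps)
    also have "Qf g k (- (v - t *\<^sub>R u)) = Qf g k (v - t *\<^sub>R u)" by (rule Qf_neg)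
    also have "\<dots> = Qf g k v - 2 * Bf g k v (t *\<^sub>R u) + Qf g k (t *\<^sub>R u)" by (rule Qf_diff[OF gl])
    also have "\<dots> = Qf g k v - 2 * t * Bf g k v u + t\<^sup>2 * Qf g k u" by (simp add: Bf_scale[OF gl] Qf_scale[OF gl])
    finally have 1: "d2 \<le> Qf g k v - 2 * t * Bf g k v u + t\<^sup>2 * Qf g k u" .
    have 2: "Qf g k u \<le> M" using M(2) w w0(1) hD unfolding u_def by auto
    have "t\<^sup>2 * Qf g k u \<le> t\<^sup>2 * M" using 2 by (intro mult_left_mono) auto
    then have "2 * t * Bf g k v u < \<eta>1 + t\<^sup>2 * M" using 1 Qv2 by linarith
    then have "t * (2 * Bf g k v u) < t * (\<theta>/4 + t * M)" unfolding \<eta>1_def by (simp add: algebra_simps power2_eq_square)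
    then have "2 * Bf g k v u < \<theta>/4 + t * M" using t(1) by (simp add: mult_less_cancel_left_pos)
    then show ?thesis using t(3) unfolding u_def by (simp add: mult.commute)
  qed
  have sepD: "Bf g k v (x0 - w) > 3 * \<theta> / 4" if "w \<in> convex hull D" for w
  proof -
    have "Bf g k v (x0 - w) = Bf g k v (v - (w - w0))"
      by (rule arg_cong[where f="Bf g k v"]) (simp add: v_def)
    also have "\<dots> = Bf g k v v - Bf g k v (w - w0)" by (rule Bf_diff[OF gl])
    finally have "Bf g k v (x0 - w) = Qf g k v - Bf g k v (w - w0)" by (simp add: Bf_self[OF gl])
    then show ?thesis using sepw[OF that] Qv by linarith
  qed
  define L where "L = (\<Sum>j<k. \<bar>g j v\<bar>)"
  have L0: "L \<ge> 0" unfolding L_def by (simp add: sum_nonneg)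
  define e where "e = min (r/2) (\<theta> / (4 * (L+1)))"
  have e: "e > 0" "2 * e \<le> r" "L * e \<le> \<theta>/4"
    using r th L0 frac_bound[OF L0 th, of e] unfolding e_def by auto
  define \<eta> where "\<eta> = min 1 (e\<^sup>2/3)"
  have eta: "\<eta> > 0" "3 * \<eta> \<le> e\<^sup>2" "\<eta> \<le> 1" unfolding \<eta>_def using e(1) by auto
  define s where "s = 2 * (1 + M) / \<theta>"
  have s: "s > 0" "s * (\<theta> / 2) = 1 + M" unfolding s_def using M(1) th by (auto simp: field_simps)
  obtain z0 z where zz: "z0 \<in> A" "z \<in> D" "\<forall>j<k. \<bar>g j (z - z0)\<bar> < e"
    "\<forall>y\<in>A. Qf g k (y - (x0 - s *\<^sub>R v)) < Qf g k (z0 - (x0 - s *\<^sub>R v)) + \<eta>"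
    using getD'[OF eta(1,2) e(1,2), of "x0 - s *\<^sub>R v"] by blast
  have a1: "Bf g k v (x0 - z0) < \<theta>/4"
  proof -
    have i1: "Qf g k (x0 - (x0 - s *\<^sub>R v)) < Qf g k (z0 - (x0 - s *\<^sub>R v)) + \<eta>" using zz(4) A(3) by blast
    have i2: "Qf g k (x0 - (x0 - s *\<^sub>R v)) = s\<^sup>2 * Qf g k v" by (simp add: Qf_scale[OF gl])
    have i3: "Qf g k (z0 - (x0 - s *\<^sub>R v)) = Qf g k (z0 - x0) + 2 * (s * Bf g k v (z0 - x0)) + s\<^sup>2 * Qf g k v"
    proof -
      have "Qf g k (z0 - (x0 - s *\<^sub>R v)) = Qf g k ((z0 - x0) + s *\<^sub>R v)"
        by (rule arg_cong[where f="Qf g k"]) simp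
      also have "\<dots> = Qf g k (z0 - x0) + 2 * Bf g k (z0 - x0) (s *\<^sub>R v) + Qf g k (s *\<^sub>R v)"
        by (rule Qf_add[OF gl])
      also have "Bf g k (z0 - x0) (s *\<^sub>R v) = s * Bf g k v (z0 - x0)"
        by (simp add: Bf_scale[OF gl] Bf_sym[OF gl, of "z0 - x0" v])
      also have "Qf g k (s *\<^sub>R v) = s\<^sup>2 * Qf g k v" by (rule Qf_scale[OF gl])
      finally show ?thesis .
    qed
    have i4: "Qf g k (z0 - x0) \<le> M" using M(2) zz(1) A(3) by auto
    have i5: "Bf g k v (x0 - z0) = - Bf g k v (z0 - x0)" by (simp add: Bf_diff[OF gl])
    have i6: "s * (2 * Bf g k v (x0 - z0)) = - 2 * (s * Bf g k v (z0 - x0))" using i5 by simp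
    have "s * (2 * Bf g k v (x0 - z0)) < 1 + M" using i1 i2 i3 i4 i6 eta(3) by linarith
    then have "s * (2 * Bf g k v (x0 - z0)) < s * (\<theta> / 2)" using s(2) by simp
    then have "2 * Bf g k v (x0 - z0) < \<theta> / 2" using s(1) by (simp add: mult_less_cancel_left_pos)
    then show ?thesis by simp
  qed
  have a2: "\<bar>Bf g k v (z - z0)\<bar> \<le> \<theta>/4"
  proof -
    have "\<forall>j<k. \<bar>g j (z - z0)\<bar> \<le> e" using zz(3) by (auto simp: less_imp_le)
    then have "\<bar>Bf g k v (z - z0)\<bar> \<le> L * e" unfolding L_def by (rule Bf_abs[OF gl])
    then show ?thesis using e(3) by linarith
  qed
  have "Bf g k v (x0 - z) = Bf g k v ((x0 - z0) - (z - z0))"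
    by (rule arg_cong[where f="Bf g k v"]) simp
  also have "\<dots> = Bf g k v (x0 - z0) - Bf g k v (z - z0)" by (rule Bf_diff[OF gl])
  finally have "Bf g k v (x0 - z) = Bf g k v (x0 - z0) - Bf g k v (z - z0)" .
  then have lt: "Bf g k v (x0 - z) < \<theta>/2" using a1 a2 by linarith
  have "z \<in> convex hull D" using zz(2) hull_subset[of D convex] by blast
  then have "Bf g k v (x0 - z) > 3 * \<theta> / 4" by (rule sepD)
  then show False using lt th by linarith
qed

end


lemma bourgain:
  fixes g :: "nat \<Rightarrow> 'a::real_normed_vector \<Rightarrow> real"
  assumes gl: "\<forall>j<k. bounded_linear (g j)"
    and A: "bounded A" "convex A" "x0 \<in> A" and ep: "\<epsilon> > 0"
  shows "\<exists>(m::nat) (lam::nat \<Rightarrow> real) Sl. m \<ge> 1 \<and> (\<forall>i<m. lam i > (0::real) \<and> is_slice A (Sl i)) \<and> (\<Sum>i<m. lam i) = 1 \<and>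
     (\<forall>y. (\<forall>i<m. y i \<in> Sl i) \<longrightarrow> (\<forall>j<k. \<bar>g j (\<Sum>i<m. lam i *\<^sub>R y i) - g j x0\<bar> < \<epsilon>))"
proof -
  define r where "r = \<epsilon> / 2"
  have r: "r > 0" unfolding r_def using ep by simp
  define D where "D = {w\<in>A. \<exists>Sl. is_slice A Sl \<and> w \<in> Sl \<and> (\<forall>z\<in>Sl. \<forall>j<k. \<bar>g j z - g j w\<bar> < r)}"
  obtain w where w: "w \<in> convex hull D" "Qf g k (w - x0) < r\<^sup>2"
    using approx_conv[OF gl A r _ D_def, of "r\<^sup>2"] r by auto
  obtain S u where Su: "finite S" "S \<subseteq> D" "\<forall>x\<in>S. 0 \<le> u x" "sum u S = 1" "(\<Sum>v\<in>S. u v *\<^sub>R v) = w"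
    using w(1) unfolding convex_hull_explicit by blast
  define S' where "S' = {v\<in>S. u v > 0}"
  have S'S: "S' \<subseteq> S" unfolding S'_def by auto
  have fS': "finite S'" using Su(1) S'S finite_subset by blast
  have z: "\<forall>v\<in>S - S'. u v = 0" using Su(3) unfolding S'_def by force
  have sum1: "sum u S' = 1" using sum.mono_neutral_right[OF Su(1) S'S z] Su(4) by simp
  have sumw: "(\<Sum>v\<in>S'. u v *\<^sub>R v) = w"
    using sum.mono_neutral_right[OF Su(1) S'S, of "\<lambda>v. u v *\<^sub>R v"] z Su(5) by simp
  obtain h where h: "bij_betw h {0..<card S'} S'" using ex_bij_betw_nat_finite[OF fS'] by blast
  define m where "m = card S'"
  have "S' \<noteq> {}" using sum1 by auto
  then have m1: "m \<ge> 1" unfolding m_def using fS' by (simp add: Suc_le_eq card_gt_0_iff)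
  have hS: "h i \<in> S'" if "i < m" for i using h that unfolding m_def bij_betw_def by auto
  have "\<forall>v\<in>S'. \<exists>Sl. is_slice A Sl \<and> v \<in> Sl \<and> (\<forall>z\<in>Sl. \<forall>j<k. \<bar>g j z - g j v\<bar> < r)"
    using Su(2) S'S unfolding D_def by blast
  then obtain SL where SL: "\<And>v. v \<in> S' \<Longrightarrow> is_slice A (SL v) \<and> v \<in> SL v \<and> (\<forall>z\<in>SL v. \<forall>j<k. \<bar>g j z - g j v\<bar> < r)"
    by metis
  define lam where "lam i = u (h i)" for i
  define Sl where "Sl i = SL (h i)" for i
  have reidx: "(\<Sum>i<m. f (h i)) = (\<Sum>v\<in>S'. f v)" for f :: "'a \<Rightarrow> real"
    using sum.reindex_bij_betw[OF h, of f] unfolding m_def by (simp add: atLeast0LessThan)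
  have reidx2: "(\<Sum>i<m. f (h i)) = (\<Sum>v\<in>S'. f v)" for f :: "'a \<Rightarrow> 'a"
    using sum.reindex_bij_betw[OF h, of f] unfolding m_def by (simp add: atLeast0LessThan)
  have lam_pos: "\<forall>i<m. lam i > 0 \<and> is_slice A (Sl i)"
    using hS SL unfolding lam_def Sl_def S'_def by auto
  have lam_sum: "(\<Sum>i<m. lam i) = 1" unfolding lam_def using reidx[of u] sum1 by simp
  have wsum: "(\<Sum>i<m. lam i *\<^sub>R h i) = w" unfolding lam_def using reidx2[of "\<lambda>v. u v *\<^sub>R v"] sumw by simp
  have main: "\<forall>j<k. \<bar>g j (\<Sum>i<m. lam i *\<^sub>R y i) - g j x0\<bar> < \<epsilon>" if y: "\<forall>i<m. y i \<in> Sl i" for y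
  proof (intro allI impI)
    fix j assume j: "j < k"
    have gy: "g j (\<Sum>i<m. lam i *\<^sub>R y i) = (\<Sum>i<m. lam i * g j (y i))"
      by (simp add: gsum[OF gl j] gscale[OF gl j])
    have gw: "g j w = (\<Sum>i<m. lam i * g j (h i))"
      unfolding wsum[symmetric] by (simp add: gsum[OF gl j] gscale[OF gl j])
    have d: "g j (\<Sum>i<m. lam i *\<^sub>R y i) - g j x0 = (\<Sum>i<m. lam i * (g j (y i) - g j (h i))) + (g j w - g j x0)"
      unfolding gy gw by (simp add: sum_subtractf right_diff_distrib)
    have "\<bar>\<Sum>i<m. lam i * (g j (y i) - g j (h i))\<bar> \<le> (\<Sum>i<m. \<bar>lam i * (g j (y i) - g j (h i))\<bar>)"
      by (rule sum_abs)
    also have "\<dots> \<le> (\<Sum>i<m. lam i * r)"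
    proof (rule sum_mono)
      fix i assume i: "i \<in> {..<m}"
      then have "\<bar>g j (y i) - g j (h i)\<bar> < r" using SL[OF hS] y j unfolding Sl_def by auto
      moreover have "lam i > 0" using lam_pos i by auto
      ultimately show "\<bar>lam i * (g j (y i) - g j (h i))\<bar> \<le> lam i * r"
        unfolding abs_mult by (simp add: mult_left_mono)
    qed
    also have "\<dots> = r" using lam_sum by (simp add: sum_distrib_right[symmetric])
    finally have 1: "\<bar>\<Sum>i<m. lam i * (g j (y i) - g j (h i))\<bar> \<le> r" .
    have 2: "\<bar>g j (w - x0)\<bar> < r" using coord_lt[OF gl j w(2) r] .
    have "g j (w - x0) = g j w - g j x0" by (rule gdiff[OF gl j])
    then show "\<bar>g j (\<Sum>i<m. lam i *\<^sub>R y i) - g j x0\<bar> < \<epsilon>" using 1 2 d unfolding r_def by linarith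
  qed
  show ?thesis
    by (rule exI[of _ m], rule exI[of _ lam], rule exI[of _ Sl]) (use m1 lam_pos lam_sum main in blast)
qed

lemma slice_contains_S:
  fixes A :: "'a::real_normed_vector set"
  assumes det1: "\<forall>n. is_slice A (S n)"
    and det2: "\<forall>B. B \<subseteq> A \<and> (\<forall>n. B \<inter> S n \<noteq> {}) \<longrightarrow> A \<subseteq> closure (convex hull B)"
    and A: "bounded A" "A \<noteq> {}" and Sl: "is_slice A Sl"
  shows "\<exists>n. S n \<subseteq> Sl"
proof (rule ccontr)
  assume "\<not> ?thesis"
  then have "\<forall>n. \<exists>y. y \<in> S n \<and> y \<notin> Sl" by blast
  then obtain y where y: "\<And>n. y n \<in> S n" "\<And>n. y n \<notin> Sl" by metis
  obtain f e where fe: "bounded_linear f" "e > 0" "Sl = slice A f e" using Sl unfolding is_slice_def by blast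
  have yA: "y n \<in> A" for n using det1 is_slice_subset y(1) by blast
  define c where "c = Sup (f ` A) - e"
  have fy: "f (y n) \<le> c" for n using y(2)[of n] yA[of n] unfolding fe(3) slice_def c_def by auto
  have "range y \<inter> S n \<noteq> {}" for n using y(1)[of n] by blast
  then have Acl: "A \<subseteq> closure (convex hull (range y))" using det2 yA by blast
  define H where "H = f -` {..c}"
  have "closed H" unfolding H_def
    by (intro closed_vimage closed_atMost linear_continuous_on fe(1))
  moreover have "convex H" unfolding H_def
    by (intro convex_linear_vimage bounded_linear.linear[OF fe(1)] convex_real_interval(2))
  moreover have "range y \<subseteq> H" using fy unfolding H_def by auto
  ultimately have "closure (convex hull (range y)) \<subseteq> H"
    by (intro closure_minimal hull_minimal) auto
  then have "\<forall>z\<in>A. f z \<le> c" using Acl unfolding H_def by auto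
  then have "Sup (f ` A) \<le> c" using A(2) by (intro cSup_least) auto
  then show False using fe(2) unfolding c_def by simp
qed

lemma rat_approx:
  fixes lam :: "nat \<Rightarrow> real"
  assumes m: "m \<ge> 1" and pos: "\<forall>i<m. lam i > 0" and s1: "(\<Sum>i<m. lam i) = 1" and eta: "\<eta> > 0"
  shows "\<exists>mu::nat \<Rightarrow> rat. (\<forall>i<m. (of_rat (mu i)::real) > 0 \<and> \<bar>of_rat (mu i) - lam i\<bar> < \<eta>) \<and>
            (\<Sum>i<m. (of_rat (mu i)::real)) = 1"
proof -
  have "\<forall>i. \<exists>q::rat. i < m \<longrightarrow> max 0 (lam i - \<eta> / m) < of_rat q \<and> of_rat q < lam i"
  proof
    fix i
    show "\<exists>q::rat. i < m \<longrightarrow> max 0 (lam i - \<eta> / m) < of_rat q \<and> of_rat q < lam i"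
    proof (cases "i < m")
      case True
      have "max 0 (lam i - \<eta> / m) < lam i" using pos True eta m by auto
      then obtain r where "r \<in> \<rat>" "max 0 (lam i - \<eta> / m) < r" "r < lam i"
        using Rats_dense_in_real by blast
      then show ?thesis by (auto elim!: Rats_cases)
    qed auto
  qed
  then obtain rho :: "nat \<Rightarrow> rat" where rho: "\<And>i. i < m \<Longrightarrow> max 0 (lam i - \<eta> / m) < of_rat (rho i) \<and> of_rat (rho i) < lam i"
    by metis
  define p where "p = m - 1"
  have mp: "m = Suc p" unfolding p_def using m by simp
  define mu where "mu i = (if i = p then 1 - (\<Sum>i<p. rho i) else rho i)" for i
  have sump: "(\<Sum>i<p. (of_rat (mu i)::real)) = (\<Sum>i<p. of_rat (rho i))"
    unfolding mu_def by (intro sum.cong) auto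
  have mup: "(of_rat (mu p)::real) = 1 - (\<Sum>i<p. of_rat (rho i))"
    unfolding mu_def by (simp add: of_rat_diff of_rat_sum)
  have lsum: "(\<Sum>i<p. lam i) + lam p = 1" using s1 unfolding mp by simp
  have dif_lo: "0 \<le> (\<Sum>i<p. lam i - of_rat (rho i))"
    using rho unfolding mp by (intro sum_nonneg) (auto simp: less_imp_le)
  have dif_hi: "(\<Sum>i<p. lam i - of_rat (rho i)) \<le> (\<Sum>i<p. \<eta> / m)"
  proof (rule sum_mono)
    fix i assume "i \<in> {..<p}"
    then have "i < m" unfolding mp by simp
    then show "lam i - of_rat (rho i) \<le> \<eta> / m" using rho[of i] by auto
  qed
  have "(\<Sum>i<p. \<eta> / m) = p * (\<eta> / m)" by simp
  also have "\<dots> < \<eta>" using eta unfolding mp by (simp add: field_simps)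
  finally have dh: "(\<Sum>i<p. lam i - of_rat (rho i)) < \<eta>" using dif_hi by linarith
  have eqp: "(of_rat (mu p)::real) - lam p = (\<Sum>i<p. lam i - of_rat (rho i))"
    using mup lsum by (simp add: sum_subtractf)
  have "\<forall>i<m. (of_rat (mu i)::real) > 0 \<and> \<bar>of_rat (mu i) - lam i\<bar> < \<eta>"
  proof (intro allI impI)
    fix i assume i: "i < m"
    show "(of_rat (mu i)::real) > 0 \<and> \<bar>of_rat (mu i) - lam i\<bar> < \<eta>"
    proof (cases "i = p")
      case True
      have "lam p > 0" using pos i True by auto
      then have h1: "(of_rat (mu p)::real) > 0" using eqp dif_lo by linarith
      have h2: "\<bar>(of_rat (mu p)::real) - lam p\<bar> < \<eta>" using eqp dif_lo dh by linarith
      show ?thesis using h1 h2 True by blast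
    next
      case False
      then have "mu i = rho i" unfolding mu_def by simp
      moreover have "\<eta> / m \<le> \<eta>" using eta m by (simp add: field_simps)
      ultimately show ?thesis using rho[OF i] by auto
    qed
  qed
  moreover have "(\<Sum>i<m. (of_rat (mu i)::real)) = 1" unfolding mp using sump mup by simp
  ultimately show ?thesis by blast
qed


lemma forward:
  fixes A :: "'a::real_normed_vector set"
  assumes A: "bounded A" "convex A" and scd: "SCD_set A"
  shows "\<exists>V::nat \<Rightarrow> 'a set. (\<forall>n. is_ccs A (V n)) \<and>
      (\<forall>U. openin (subtopology weak_topology A) U \<and> U \<noteq> {} \<longrightarrow> (\<exists>n. V n \<subseteq> U))"
proof -
  obtain S :: "nat \<Rightarrow> 'a set" where S1: "\<forall>n. is_slice A (S n)"
    and S2: "\<forall>B. B \<subseteq> A \<and> (\<forall>n. B \<inter> S n \<noteq> {}) \<longrightarrow> A \<subseteq> closure (convex hull B)"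
    using scd unfolding SCD_set_def by blast
  define valid where "valid p \<longleftrightarrow> length (fst p) = length (snd p) \<and> length (fst p) \<ge> 1 \<and>
      (\<forall>i<length (fst p). (of_rat (snd p ! i)::real) > 0) \<and> (\<Sum>i<length (fst p). (of_rat (snd p ! i)::real)) = 1"
    for p :: "nat list \<times> rat list"
  define W where "W p = {\<Sum>i<length (fst p). (of_rat (snd p ! i)::real) *\<^sub>R x i | x. \<forall>i<length (fst p). x i \<in> S (fst p ! i)}"
    for p :: "nat list \<times> rat list"
  define V where "V n = (if valid (from_nat n) then W (from_nat n) else W ([0], [1]))" for n
  have Wccs: "is_ccs A (W p)" if "valid p" for p
    unfolding is_ccs_def W_def
    by (rule exI[of _ "length (fst p)"], rule exI[of _ "\<lambda>i. of_rat (snd p ! i)"], rule exI[of _ "\<lambda>i. S (fst p ! i)"])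
       (use that S1 in \<open>auto simp: valid_def\<close>)
  have v0: "valid ([0], [1])" unfolding valid_def by simp
  have Vccs: "\<forall>n. is_ccs A (V n)" unfolding V_def using Wccs v0 by auto
  have "\<exists>n. V n \<subseteq> U" if U: "openin (subtopology weak_topology A) U" "U \<noteq> {}" for U
  proof -
    obtain x0 where x0: "x0 \<in> U" using U(2) by auto
    obtain Ow where Ow: "openin weak_topology Ow" "U = Ow \<inter> A" using U(1) unfolding openin_subtopology by auto
    have x0A: "x0 \<in> A" and x0O: "x0 \<in> Ow" using x0 Ow(2) by auto
    obtain k and g :: "nat \<Rightarrow> 'a \<Rightarrow> real" and \<epsilon> :: real where
      gk: "\<forall>j<k. bounded_linear (g j)" "\<epsilon> > 0" "{y. \<forall>j<k. \<bar>g j y - g j x0\<bar> < \<epsilon>} \<subseteq> Ow"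
      using weak_open_nbhd[OF Ow(1) x0O] by blast
    have Ane: "A \<noteq> {}" using x0A by auto
    obtain m and lam :: "nat \<Rightarrow> real" and Sl where
      B: "m \<ge> 1" "\<forall>i<m. lam i > 0 \<and> is_slice A (Sl i)" "(\<Sum>i<m. lam i) = 1"
         "\<forall>y. (\<forall>i<m. y i \<in> Sl i) \<longrightarrow> (\<forall>j<k. \<bar>g j (\<Sum>i<m. lam i *\<^sub>R y i) - g j x0\<bar> < \<epsilon>/2)"
      using bourgain[OF gk(1) A x0A, of "\<epsilon>/2"] gk(2) by auto
    have "\<forall>i. \<exists>n. i < m \<longrightarrow> S n \<subseteq> Sl i"
      using slice_contains_S[OF S1 S2 A(1) Ane] B(2) by blast
    then obtain N where N: "\<And>i. i < m \<Longrightarrow> S (N i) \<subseteq> Sl i" by metis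
    obtain K where K: "K > 0" "\<forall>j<k. \<forall>u. \<bar>g j u\<bar> \<le> norm u * K" using unif_bound_gen[OF gk(1)] by auto
    obtain R where R: "\<forall>a\<in>A. norm a \<le> R" using A(1) unfolding bounded_iff by auto
    have R0: "R \<ge> 0" using R x0A norm_ge_zero order_trans by blast
    define Kb where "Kb = R * K"
    have Kb: "Kb \<ge> 0" unfolding Kb_def using R0 K(1) by simp
    have gb: "\<bar>g j a\<bar> \<le> Kb" if "j < k" "a \<in> A" for j a
    proof -
      have "\<bar>g j a\<bar> \<le> norm a * K" using K(2) that(1) by auto
      also have "\<dots> \<le> R * K" using R that(2) K(1) by (simp add: mult_right_mono)
      finally show ?thesis unfolding Kb_def .
    qed
    define \<eta> where "\<eta> = \<epsilon> / (2 * (m * Kb + 1))"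
    have eta: "\<eta> > 0" unfolding \<eta>_def using gk(2) Kb by (simp add: add_nonneg_pos)
    have etab: "m * \<eta> * Kb < \<epsilon> / 2"
    proof -
      have "m * \<eta> * Kb = (\<epsilon> / 2) * (m * Kb / (m * Kb + 1))" unfolding \<eta>_def using Kb by (simp add: field_simps)
      also have "\<dots> < (\<epsilon> / 2) * 1"
      proof (rule mult_strict_left_mono)
        have d: "real m * Kb + 1 > 0" using Kb by (simp add: add_nonneg_pos)
        then show "real m * Kb / (real m * Kb + 1) < 1" by (simp add: divide_less_eq)
        show "\<epsilon> / 2 > 0" using gk(2) by simp
      qed
      finally show ?thesis by simp
    qed
    obtain mu :: "nat \<Rightarrow> rat" where mu: "\<forall>i<m. (of_rat (mu i)::real) > 0 \<and> \<bar>of_rat (mu i) - lam i\<bar> < \<eta>"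
      "(\<Sum>i<m. (of_rat (mu i)::real)) = 1"
      using rat_approx[OF B(1) _ B(3) eta] B(2) by blast
    define p where "p = (map N [0..<m], map mu [0..<m])"
    have vp: "valid p" unfolding valid_def p_def using B(1) mu by auto
    define n where "n = to_nat p"
    have Vn: "V n = W p" unfolding V_def n_def using vp by simp
    have "W p \<subseteq> U"
    proof
      fix z assume "z \<in> W p"
      then obtain x where x: "z = (\<Sum>i<m. (of_rat (mu i)::real) *\<^sub>R x i)" "\<forall>i<m. x i \<in> S (N i)"
        unfolding W_def p_def by auto
      have xSl: "\<forall>i<m. x i \<in> Sl i" using x(2) N by blast
      have xA: "x i \<in> A" if "i < m" for i using xSl that B(2) is_slice_subset by blast
      have zA: "z \<in> A" unfolding x(1)
        by (rule convex_sum) (use A(2) mu xA in \<open>auto simp: less_imp_le\<close>)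
      have "\<bar>g j z - g j x0\<bar> < \<epsilon>" if j: "j < k" for j
      proof -
        have e1: "\<bar>g j (\<Sum>i<m. lam i *\<^sub>R x i) - g j x0\<bar> < \<epsilon>/2" using B(4) xSl j by blast
        have "g j z - g j (\<Sum>i<m. lam i *\<^sub>R x i) = (\<Sum>i<m. (of_rat (mu i) - lam i) * g j (x i))"
          unfolding x(1) by (simp add: gsum[OF gk(1) j] gscale[OF gk(1) j] sum_subtractf left_diff_distrib)
        also have "\<bar>\<dots>\<bar> \<le> (\<Sum>i<m. \<bar>(of_rat (mu i) - lam i) * g j (x i)\<bar>)" by (rule sum_abs)
        also have "\<dots> \<le> (\<Sum>i<m. \<eta> * Kb)"
        proof (rule sum_mono)
          fix i assume "i \<in> {..<m}"
          then have i: "i < m" by simp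
          have "\<bar>of_rat (mu i) - lam i\<bar> \<le> \<eta>" using mu(1) i by (auto simp: less_imp_le)
          moreover have "\<bar>g j (x i)\<bar> \<le> Kb" using gb[OF j xA[OF i]] .
          ultimately show "\<bar>(of_rat (mu i) - lam i) * g j (x i)\<bar> \<le> \<eta> * Kb"
            unfolding abs_mult by (intro mult_mono) auto
        qed
        also have "\<dots> = m * \<eta> * Kb" by simp
        finally have e2: "\<bar>g j z - g j (\<Sum>i<m. lam i *\<^sub>R x i)\<bar> \<le> m * \<eta> * Kb" .
        show ?thesis using e1 e2 etab by linarith
      qed
      then have "z \<in> Ow" using gk(3) by auto
      then show "z \<in> U" using zA Ow(2) by auto
    qed
    then show ?thesis using Vn by auto
  qed
  then show ?thesis using Vccs by blast
qed


theorem theorem6p11: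
  fixes A :: "'a::banach set"
  assumes "bounded A" and "convex A"
  shows "SCD_set A \<longleftrightarrow>
    (\<exists>V::nat \<Rightarrow> 'a set. (\<forall>n. is_ccs A (V n)) \<and>
      (\<forall>U. openin (subtopology weak_topology A) U \<and> U \<noteq> {} \<longrightarrow> (\<exists>n. V n \<subseteq> U)))"
proof
  assume "SCD_set A"
  then show "\<exists>V::nat \<Rightarrow> 'a set. (\<forall>n. is_ccs A (V n)) \<and>
      (\<forall>U. openin (subtopology weak_topology A) U \<and> U \<noteq> {} \<longrightarrow> (\<exists>n. V n \<subseteq> U))"
    by (rule forward[OF assms])
next
  assume "\<exists>V::nat \<Rightarrow> 'a set. (\<forall>n. is_ccs A (V n)) \<and>
      (\<forall>U. openin (subtopology weak_topology A) U \<and> U \<noteq> {} \<longrightarrow> (\<exists>n. V n \<subseteq> U))"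
  then obtain V :: "nat \<Rightarrow> 'a set" where V: "\<forall>n. is_ccs A (V n)"
    "\<forall>U. openin (subtopology weak_topology A) U \<and> U \<noteq> {} \<longrightarrow> (\<exists>n. V n \<subseteq> U)" by blast
  show "SCD_set A" by (rule backward[OF V])
qed

end
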